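(* Let $\mathcal{L}\in\mathrm{Mat}_d(\mathbb{Z})$ be invertible over $\mathbb{Q}$. Let $G=\mathbb{Z}^d/\mathcal{L}^2\mathbb{Z}^d$ (a finite abelian group), let $H$ be its subgroup $\mathcal{L}\mathbb{Z}^d/\mathcal{L}^2\mathbb{Z}^d$, and note that $\mathcal{L}$ induces a homomorphism $G\to G$, also denoted $\mathcal{L}$. Let $X\subseteq G$ with $0\in X$. Then at least one of the following holds: (1) $X+H$ does not generate $G$; (2) $X+\mathcal{L} X\supsetneq X$; (3) $H\subseteq X$.
   Context: Note $X+\mathcal{L}X\supseteq X$ always holds since $0\in X$. *)

theory Defs
  imports "HOL-Analysis.Analysis" "HOL-Algebra.Algebra"
begin

definition Zd :: "(int ^ 'd::finite) monoid" where
  "Zd = \<lparr>carrier = UNIV, mult = (+), one = 0\<rparr>"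

definition latt :: "int ^ 'd ^ 'd \<Rightarrow> (int ^ 'd::finite) set" where
  "latt M = range (\<lambda>v. M *v v)"

definition Gq :: "int ^ 'd ^ 'd \<Rightarrow> (int ^ 'd::finite) set monoid" where
  "Gq L = Zd Mod latt (L ** L)"

definition Hq :: "int ^ 'd ^ 'd \<Rightarrow> (int ^ 'd::finite) set set" where
  "Hq L = (\<lambda>v. latt (L ** L) #>\<^bsub>Zd\<^esub> v) ` latt L"

text \<open>The endomorphism of G induced by L: the coset v + L^2 Z^d goes to L v + L^2 Z^d.\<close>
definition Lind :: "int ^ 'd ^ 'd \<Rightarrow> (int ^ 'd::finite) set \<Rightarrow> (int ^ 'd) set" where
  "Lind L C = latt (L ** L) <#>\<^bsub>Zd\<^esub> ((\<lambda>v. L *v v) ` C)"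

end

theory Submission
  imports Defs
begin


lemma det_of_int: "det (map_matrix of_int A) = (of_int (det A) :: 'a::comm_ring_1)"
  by (simp add: det_def of_int_sum of_int_prod)

lemma mv_of_int: "map_matrix of_int A *v (\<chi> i. of_int (x$i)) = ((\<chi> i. of_int ((A *v x)$i)) :: 'a::comm_ring_1^'n::finite)"
  by (simp add: matrix_vector_mult_def vec_eq_iff of_int_sum)

lemma int_cramer:
  fixes M :: "int^'n::finite^'n"
  assumes "det (map_matrix rat_of_int M) \<noteq> 0"
  shows "\<exists>w. M *v w = det M *s v"
proof -
  define MQ where "MQ = map_matrix rat_of_int M"
  define vQ where "vQ = (\<chi> i. rat_of_int (v$i))"
  obtain B where B: "MQ ** B = mat 1" using assms unfolding MQ_def invertible_det_nz[symmetric] invertible_def by blast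
  define x where "x = B *v vQ"
  have x: "MQ *v x = vQ" unfolding x_def by (simp add: matrix_vector_mul_assoc B)
  define w where "w = (\<chi> k. det (\<chi> i j. if j = k then v$i else M$i$j))"
  have wk: "x$k * det MQ = rat_of_int (w$k)" for k
  proof -
    have "(\<chi> i j. if j = k then (MQ *v x)$i else MQ$i$j) = map_matrix rat_of_int (\<chi> i j. if j = k then v$i else M$i$j)"
      using x[unfolded MQ_def vQ_def] by (simp add: MQ_def vec_eq_iff)
    then show ?thesis using cramer_lemma[where A=MQ and x=x and k=k] by (simp add: w_def det_of_int)
  qed
  have "MQ *v (\<chi> i. rat_of_int (w$i)) = MQ *v (det MQ *s x)"
    by (rule arg_cong[where f="\<lambda>y. MQ *v y"]) (simp add: vec_eq_iff wk[symmetric] mult.commute)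
  also have "\<dots> = det MQ *s vQ" by (simp add: vector_scalar_commute x)
  finally have "(\<chi> i. rat_of_int ((M *v w)$i)) = (\<chi> i. rat_of_int ((det M *s v)$i))"
    by (simp add: mv_of_int[symmetric] MQ_def vQ_def det_of_int vec_eq_iff)
  then have "M *v w = det M *s v" by (simp add: vec_eq_iff flip: of_int_mult)
  then show ?thesis by blast
qed



lemma Zd_simps[simp]: "carrier Zd = UNIV" "mult Zd = (+)" "one Zd = 0"
  by (simp_all add: Zd_def)

lemma Zd_comm_group: "comm_group (Zd :: (int^'d::finite) monoid)"
  by (rule comm_groupI) (auto simp: Zd_def add.assoc add.commute intro: exI[where x="- _"])

lemma inv_Zd[simp]: "inv\<^bsub>Zd\<^esub> (x::int^'d::finite) = - x"
  using comm_monoid.comm_inv_char[OF comm_group.axioms(1)[OF Zd_comm_group], of x "-x"] by simp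

lemma mv_neg: "(A::int^'n::finite^'m::finite) *v (- x) = - (A *v x)"
  by (simp add: matrix_vector_mult_def vec_eq_iff sum_negf)
lemma mv_diff: "(A::int^'n::finite^'m::finite) *v (x - y) = A *v x - A *v y"
  by (simp add: matrix_vector_mult_def vec_eq_iff sum_subtractf right_diff_distrib)

definition K :: "int ^ 'd ^ 'd \<Rightarrow> (int ^ 'd::finite) set" where "K L = latt (L ** L)"

lemma K_add: "a \<in> K L \<Longrightarrow> b \<in> K L \<Longrightarrow> a + b \<in> K L"
proof -
  assume "a \<in> K L" "b \<in> K L"
  then obtain u v where "a = (L ** L) *v u" "b = (L ** L) *v v" by (auto simp: K_def latt_def)
  then have "a + b = (L ** L) *v (u + v)" by (simp only: matrix_vector_right_distrib)
  then show ?thesis unfolding K_def latt_def by (rule image_eqI) simp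
qed
lemma K_neg: "a \<in> K L \<Longrightarrow> - a \<in> K L"
proof -
  assume "a \<in> K L"
  then obtain u where "a = (L ** L) *v u" by (auto simp: K_def latt_def)
  then have "- a = (L ** L) *v (- u)" by (simp only: mv_neg)
  then show ?thesis unfolding K_def latt_def by (rule image_eqI) simp
qed
lemma K_0: "0 \<in> K L"
proof -
  have "0 = (L ** L) *v 0" by (simp only: matrix_vector_mult_0_right)
  then show ?thesis unfolding K_def latt_def by (rule image_eqI) simp
qed
lemma K_diff: "a \<in> K L \<Longrightarrow> b \<in> K L \<Longrightarrow> a - b \<in> K L"
  using K_add[of a L "- b"] K_neg[of b L] by simp
lemma K_L: "a \<in> K L \<Longrightarrow> L *v a \<in> K L"
proof -
  assume "a \<in> K L"
  then obtain v where v: "a = (L ** L) *v v" by (auto simp: K_def latt_def)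
  have "L *v a = (L ** L) *v (L *v v)"
    unfolding v matrix_vector_mul_assoc matrix_mul_assoc ..
  then show ?thesis unfolding K_def latt_def by (rule image_eqI) simp
qed
lemma K_LL: "L *v (L *v w) \<in> K L"
  unfolding K_def latt_def matrix_vector_mul_assoc by (rule rangeI)
lemma K_M: "(L ** L) *v w \<in> K L"
  unfolding K_def latt_def by (rule rangeI)

lemma K_subgroup: "subgroup (K L) Zd"
  by (rule subgroup.intro) (auto simp: K_add K_neg K_0)

lemma K_normal: "K L \<lhd> Zd"
  using comm_group.normal_iff_subgroup[OF Zd_comm_group] K_subgroup by blast

definition cc :: "int ^ 'd ^ 'd \<Rightarrow> int ^ 'd::finite \<Rightarrow> (int ^ 'd) set" where
  "cc L v = K L #>\<^bsub>Zd\<^esub> v"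

lemma cc_eq: "cc L v = (\<lambda>k. k + v) ` K L"
  by (auto simp: cc_def r_coset_def)

lemma cc_eq_iff: "cc L a = cc L b \<longleftrightarrow> a - b \<in> K L"
proof
  assume "cc L a = cc L b"
  then have "0 + a \<in> (\<lambda>k. k + b) ` K L" using K_0 unfolding cc_eq by blast
  then obtain k where "k \<in> K L" "a = k + b" by auto
  then show "a - b \<in> K L" by simp
next
  assume h: "a - b \<in> K L"
  show "cc L a = cc L b" unfolding cc_eq
  proof (intro equalityI subsetI)
    fix y assume "y \<in> (\<lambda>k. k + a) ` K L"
    then obtain k where k: "k \<in> K L" "y = k + a" by auto
    then have "y = (k + (a - b)) + b" by simp
    show "y \<in> (\<lambda>k. k + b) ` K L" using k h \<open>y = (k + (a - b)) + b\<close>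
      by (intro image_eqI[of _ _ "k + (a - b)"]) (auto intro: K_add)
  next
    fix y assume "y \<in> (\<lambda>k. k + b) ` K L"
    then obtain k where k: "k \<in> K L" "y = k + b" by auto
    then have "y = (k - (a - b)) + a" by simp
    show "y \<in> (\<lambda>k. k + a) ` K L" using k h \<open>y = (k - (a - b)) + a\<close>
      by (intro image_eqI[of _ _ "k - (a - b)"]) (auto intro: K_diff)
  qed
qed

lemma Gq_eq: "Gq L = Zd Mod K L" by (simp add: Gq_def K_def)

lemma Gq_group: "group (Gq L)"
  unfolding Gq_eq by (rule normal.factorgroup_is_group[OF K_normal])

lemma carrier_Gq: "carrier (Gq L) = range (cc L)"
  by (auto simp: Gq_eq FactGroup_def RCOSETS_def cc_def)

lemma one_Gq: "one (Gq L) = cc L 0"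
  by (simp add: Gq_eq FactGroup_def cc_eq)

lemma mult_Gq: "mult (Gq L) = set_mult Zd"
  by (simp add: Gq_eq FactGroup_def)

lemma cc_mult: "cc L a <#>\<^bsub>Zd\<^esub> cc L b = cc L (a + b)"
  unfolding cc_def using normal.rcos_sum[OF K_normal, of a b] by simp

lemma cc_mult_Gq: "cc L a \<otimes>\<^bsub>Gq L\<^esub> cc L b = cc L (a + b)"
  by (simp add: mult_Gq cc_mult)

lemma inv_Gq: "inv\<^bsub>Gq L\<^esub> (cc L a) = cc L (- a)"
  by (rule group.inv_equality[OF Gq_group]) (auto simp: cc_mult_Gq one_Gq carrier_Gq)

lemma Lind_cc: "Lind L (cc L v) = cc L (L *v v)"
proof -
  have "Lind L (cc L v) = (\<Union>k\<in>K L. \<Union>k'\<in>K L. {k + (L *v k' + L *v v)})"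
    by (simp add: Lind_def K_def[symmetric] set_mult_def cc_eq matrix_vector_right_distrib)
  also have "\<dots> = cc L (L *v v)"
    unfolding cc_eq
  proof (intro equalityI subsetI)
    fix y assume "y \<in> (\<Union>k\<in>K L. \<Union>k'\<in>K L. {k + (L *v k' + L *v v)})"
    then obtain k k' where "k \<in> K L" "k' \<in> K L" "y = (k + L *v k') + L *v v" by (auto simp: add.assoc)
    then show "y \<in> (\<lambda>k. k + L *v v) ` K L"
      by (intro image_eqI[of _ _ "k + L *v k'"]) (auto intro: K_add K_L)
  next
    fix y assume "y \<in> (\<lambda>k. k + L *v v) ` K L"
    then obtain k where k: "k \<in> K L" "y = k + L *v v" by auto
    have "y = k + (L *v 0 + L *v v)" using k(2) by simp
    then show "y \<in> (\<Union>k\<in>K L. \<Union>k'\<in>K L. {k + (L *v k' + L *v v)})" using K_0[of L] k(1) by blast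
  qed
  finally show ?thesis .
qed

lemma Hq_eq: "Hq L = (\<lambda>w. cc L (L *v w)) ` UNIV"
  by (auto simp: Hq_def cc_def K_def latt_def)


theorem lemma3p2:
  fixes L :: "int ^ 'd::finite ^ 'd"
    and S :: "(int ^ 'd) set set"
  assumes "invertible (map_matrix rat_of_int L)"
    and "S \<subseteq> carrier (Gq L)"
    and "one (Gq L) \<in> S"
  shows "generate (Gq L) (set_mult (Gq L) S (Hq L)) \<noteq> carrier (Gq L)
       \<or> S \<subset> set_mult (Gq L) S (Lind L ` S)
       \<or> Hq L \<subseteq> S"
proof -
  { assume ngen: "generate (Gq L) (set_mult (Gq L) S (Hq L)) = carrier (Gq L)"
      and nstrict: "\<not> S \<subset> set_mult (Gq L) S (Lind L ` S)"
    have oneS: "cc L 0 \<in> S" using assms(3) by (simp add: one_Gq)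
    have Sc: "\<exists>a. s = cc L a" if "s \<in> S" for s
      using assms(2) that by (auto simp: carrier_Gq)
    have Lind0: "Lind L (cc L 0) = cc L 0" by (simp add: Lind_cc)
    have SP: "S \<subseteq> set_mult (Gq L) S (Lind L ` S)"
    proof
      fix s assume s: "s \<in> S"
      then obtain a where a: "s = cc L a" using Sc by blast
      have "s = s \<otimes>\<^bsub>Gq L\<^esub> Lind L (cc L 0)" by (simp add: a Lind0 cc_mult_Gq)
      then show "s \<in> set_mult (Gq L) S (Lind L ` S)"
        unfolding set_mult_def using s oneS by blast
    qed
    with nstrict have PS: "set_mult (Gq L) S (Lind L ` S) \<subseteq> S" by blast
    have clos: "cc L (a + L *v b) \<in> S" if "cc L a \<in> S" "cc L b \<in> S" for a b
    proof -
      have "cc L a \<otimes>\<^bsub>Gq L\<^esub> Lind L (cc L b) \<in> set_mult (Gq L) S (Lind L ` S)"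
        unfolding set_mult_def using that by blast
      then show ?thesis using PS by (simp add: Lind_cc cc_mult_Gq subset_iff)
    qed
    define Q where "Q a \<longleftrightarrow> (\<forall>s0. cc L s0 \<in> S \<longrightarrow> cc L (s0 + L *v a) \<in> S)" for a
    have Q0: "Q 0" by (simp add: Q_def)
    have Qadd: "Q (a + b)" if "Q a" "Q b" for a b
      using that unfolding Q_def by (metis add.assoc matrix_vector_right_distrib)
    have QS: "Q a" if "cc L a \<in> S" for a
      using that clos unfolding Q_def by blast
    have Qcong: "Q b" if "Q a" "L *v a - L *v b \<in> K L" for a b
      unfolding Q_def
    proof (intro allI impI)
      fix s0 assume "cc L s0 \<in> S"
      then have "cc L (s0 + L *v a) \<in> S" using that(1) Q_def by blast
      moreover have "(s0 + L *v a) - (s0 + L *v b) \<in> K L"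
        using that(2) by simp
      ultimately show "cc L (s0 + L *v b) \<in> S" using cc_eq_iff by metis
    qed
    have QH: "Q (a + L *v w)" if "Q a" for a w
      using Qcong[OF that, of "a + L *v w"] K_neg[OF K_LL[of L w]] by (simp add: matrix_vector_right_distrib)
    have Qmult: "Q (of_nat m *s a)" if "Q a" for a m
    proof (induction m)
      case 0 then show ?case using Q0 by simp
    next
      case (Suc m)
      have "of_nat (Suc m) *s a = of_nat m *s a + a" by (simp add: vector_sadd_rdistrib)
      then show ?case using Qadd[OF Suc that] by (simp add: add.commute)
    qed
    have detM: "det (map_matrix rat_of_int (L ** L)) \<noteq> 0"
    proof -
      have "det (map_matrix rat_of_int (L ** L)) = rat_of_int (det L) * rat_of_int (det L)"
        by (simp add: det_of_int det_mul)
      moreover have "rat_of_int (det L) \<noteq> 0"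
        using assms(1) by (simp add: invertible_det_nz det_of_int)
      ultimately show ?thesis by simp
    qed
    have Qneg: "Q (- a)" if "Q a" for a
    proof -
      obtain w where w: "(L ** L) *v w = det (L ** L) *s a" using int_cramer[OF detM] by blast
      define N where "N = det (L ** L)"
      have N0: "N \<noteq> 0" using detM by (simp add: det_of_int N_def)
      define n where "n = nat \<bar>N\<bar>"
      have n1: "n \<ge> 1" using N0 by (simp add: n_def)
      have inK: "of_int \<bar>N\<bar> *s a \<in> K L"
      proof (cases "N > 0")
        case True then show ?thesis using K_M[of L w] w by (simp add: N_def)
      next
        case False
        then have "of_int \<bar>N\<bar> *s a = - (N *s a)" using N0 by (simp add: vec_eq_iff)
        then show ?thesis using K_neg[OF K_M[of L w]] w by (simp add: N_def)
      qed
      have "of_nat (n - 1) *s a - (- a) = of_nat n *s a"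
        using n1 by (simp add: vector_sadd_rdistrib of_nat_diff vec_eq_iff algebra_simps)
      also have "of_nat n *s a = of_int \<bar>N\<bar> *s a" by (simp add: n_def)
      finally have "of_nat (n - 1) *s a - (- a) \<in> K L" using inK by simp
      from K_L[OF this] have "L *v (of_nat (n - 1) *s a) - L *v (- a) \<in> K L" by (simp only: mv_diff)
      then show ?thesis by (rule Qcong[OF Qmult[OF that]])
    qed
    have gen: "\<exists>a. g = cc L a \<and> Q a" if "g \<in> generate (Gq L) (set_mult (Gq L) S (Hq L))" for g
      using that
    proof (induction rule: generate.induct)
      case one then show ?case using Q0 by (auto simp: one_Gq)
    next
      case (incl h)
      then obtain s t where st: "s \<in> S" "t \<in> Hq L" "h = s \<otimes>\<^bsub>Gq L\<^esub> t" unfolding set_mult_def by blast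
      obtain a where a: "s = cc L a" using Sc st(1) by blast
      obtain w where t: "t = cc L (L *v w)" using st(2) by (auto simp: Hq_eq)
      have "h = cc L (a + L *v w)" using st(3) a t by (simp add: cc_mult_Gq)
      moreover have "Q (a + L *v w)" using QH QS st(1) a by blast
      ultimately show ?case by blast
    next
      case (inv h)
      then obtain s t where st: "s \<in> S" "t \<in> Hq L" "h = s \<otimes>\<^bsub>Gq L\<^esub> t" unfolding set_mult_def by blast
      obtain a where a: "s = cc L a" using Sc st(1) by blast
      obtain w where t: "t = cc L (L *v w)" using st(2) by (auto simp: Hq_eq)
      have "inv\<^bsub>Gq L\<^esub> h = cc L (- (a + L *v w))" using st(3) a t by (simp add: cc_mult_Gq inv_Gq)
      moreover have "Q (- (a + L *v w))" using Qneg QH QS st(1) a by blast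
      ultimately show ?case by blast
    next
      case (eng h1 h2)
      then obtain a b where "h1 = cc L a" "Q a" "h2 = cc L b" "Q b" by blast
      then show ?case using Qadd by (auto simp: cc_mult_Gq)
    qed
    have "Hq L \<subseteq> S"
    proof
      fix h assume "h \<in> Hq L"
      then obtain w where h: "h = cc L (L *v w)" by (auto simp: Hq_eq)
      have "cc L w \<in> generate (Gq L) (set_mult (Gq L) S (Hq L))" using ngen by (simp add: carrier_Gq)
      then obtain a where a: "cc L w = cc L a" "Q a" using gen by blast
      have "cc L (0 + L *v a) \<in> S" using a(2) oneS unfolding Q_def by blast
      moreover have "L *v a - L *v w \<in> K L"
        using K_L[of "a - w" L] a(1) cc_eq_iff by (metis mv_diff)
      ultimately show "h \<in> S" using h cc_eq_iff by (metis add_0)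
    qed
  }
  then show ?thesis by blast
qed

end
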